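(* Let $P$ be the Borel probability measure on $\mathbb{R}$ with density $f(x)=(3/2)^n$ if $x\in J_n$ for some $n\in\mathbb{N}$, and $f(x)=0$ otherwise, where $J_n=[1-\frac{1}{3^{n-1}},\,1-\frac{2}{3^n}]$. Let $k,n\in\mathbb{N}$. Then the set $\{1-\frac{1}{3^{k-1}}+\frac{2i-1}{2n}\frac{1}{3^k}: 1\le i\le n\}$ is the unique optimal set of $n$-means for $P(\cdot|J_k)$. Moreover, if $\alpha_n(P(\cdot|J_k))$ denotes this set and $\alpha_1(P(\cdot|J_{(k,\infty)}))$ denotes an optimal set of one-mean for $P(\cdot|J_{(k,\infty)})$, then \[V(P,\alpha_n(P(\cdot|J_k)),J_k)=\frac{1}{n^2}\frac{1}{12}\frac{1}{18^k}\quad\text{and}\quad V(P,\alpha_1(P(\cdot|J_{(k,\infty)})),J_{(k,\infty)})=\frac{25}{204}\frac{1}{18^k}.\]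
   Context: $\mathbb{N}=\{1,2,3,\dots\}$. $J_{(k,\infty)}:=\bigcup_{j=k+1}^\infty J_j$. For a Borel set $B$ with $P(B)>0$, $P(\cdot|B)$ is the conditional probability $P(\cdot\cap B)/P(B)$. For a Borel probability $Q$ on $\mathbb{R}$ and $n\in\mathbb{N}$, an optimal set of $n$-means for $Q$ is a set $\alpha\subset\mathbb{R}$ with $\mathrm{card}(\alpha)\le n$ attaining $\inf\{\int\min_{a\in\alpha}(x-a)^2\,dQ(x):\alpha\subset\mathbb{R},\ \mathrm{card}(\alpha)\le n\}$. For a finite set $\alpha$ and Borel set $B$, $V(P,\alpha,B):=\int_B\min_{a\in\alpha}(x-a)^2\,dP(x)$. *)

theory Defs
  imports "HOL-Probability.Probability"
begin

definition Jset :: "nat \<Rightarrow> real set" where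
  "Jset n = {1 - 1 / 3 ^ (n - 1) .. 1 - 2 / 3 ^ n}"

definition Jtail :: "nat \<Rightarrow> real set" where
  "Jtail k = (\<Union>j\<in>{k+1..}. Jset j)"

text \<open>Density: (3/2)^n on J_n (n >= 1), 0 elsewhere (the J_n are pairwise disjoint).\<close>
definition dens :: "real \<Rightarrow> real" where
  "dens x = (if \<exists>n\<ge>1. x \<in> Jset n
             then (3/2) ^ (LEAST n. n \<ge> 1 \<and> x \<in> Jset n) else 0)"

definition Pm :: "real measure" where
  "Pm = density lborel (\<lambda>x. ennreal (dens x))"

definition cond_measure :: "real measure \<Rightarrow> real set \<Rightarrow> real measure" where
  "cond_measure M B = density M (\<lambda>x. indicator B x / emeasure M B)"

definition Verr :: "real measure \<Rightarrow> real set \<Rightarrow> real set \<Rightarrow> ennreal" where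
  "Verr Q \<alpha> B = (\<integral>\<^sup>+ x. ennreal (Min ((\<lambda>a. (x - a)\<^sup>2) ` \<alpha>)) * indicator B x \<partial>Q)"

definition qerr :: "real measure \<Rightarrow> real set \<Rightarrow> ennreal" where
  "qerr Q \<alpha> = (\<integral>\<^sup>+ x. ennreal (Min ((\<lambda>a. (x - a)\<^sup>2) ` \<alpha>)) \<partial>Q)"

definition admissible :: "nat \<Rightarrow> real set \<Rightarrow> bool" where
  "admissible n \<alpha> \<longleftrightarrow> finite \<alpha> \<and> \<alpha> \<noteq> {} \<and> card \<alpha> \<le> n"

definition optimal_n_means :: "real measure \<Rightarrow> nat \<Rightarrow> real set \<Rightarrow> bool" where
  "optimal_n_means Q n \<alpha> \<longleftrightarrow> admissible n \<alpha> \<and>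
     (\<forall>\<beta>. admissible n \<beta> \<longrightarrow> qerr Q \<alpha> \<le> qerr Q \<beta>)"

end

theory Submission
  imports Defs
begin


definition Fq :: "real set \<Rightarrow> real \<Rightarrow> real \<Rightarrow> real" where
  "Fq \<beta> a c = integral {a..c} (\<lambda>x. Min ((\<lambda>b. (x - b)\<^sup>2) ` \<beta>))"

definition mids :: "nat \<Rightarrow> real \<Rightarrow> real \<Rightarrow> real set" where
  "mids m a c = {a + (2 * real i - 1) / (2 * real m) * (c - a) | i. 1 \<le> i \<and> i \<le> m}"

lemma sq_int:
  fixes a c b :: real
  assumes "a \<le> c"
  shows "integral {a..c} (\<lambda>x. (x - b)\<^sup>2) = ((c - b)^3 - (a - b)^3) / 3"
proof -
  have "((\<lambda>x. (x - b)\<^sup>2) has_integral ((\<lambda>x. (x - b)^3 / 3) c - (\<lambda>x. (x - b)^3 / 3) a)) {a..c}"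
  proof (rule fundamental_theorem_of_calculus[OF assms])
    fix x assume "x \<in> {a..c}"
    have "((\<lambda>x. (x - b)^3 / 3) has_real_derivative (x - b)\<^sup>2) (at x within {a..c})"
      by (auto intro!: derivative_eq_intros simp: power2_eq_square)
    then show "((\<lambda>x. (x - b)^3 / 3) has_vector_derivative (x - b)\<^sup>2) (at x within {a..c})"
      by (simp add: has_real_derivative_iff_has_vector_derivative)
  qed
  then show ?thesis by (simp add: integral_unique diff_divide_distrib)
qed

lemma sq_int_eq:
  fixes a c b :: real
  shows "((c - b)^3 - (a - b)^3) / 3 = (c - a)^3 / 12 + (c - a) * (b - (a + c) / 2)\<^sup>2"
  by (simp add: power2_eq_square power3_eq_cube field_simps)

lemma cont_Min:
  assumes "finite \<beta>" "\<beta> \<noteq> {}"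
  shows "continuous_on S (\<lambda>x::real. Min ((\<lambda>b. (x - b)\<^sup>2) ` \<beta>))"
  using assms
proof (induction \<beta> rule: finite_ne_induct)
  case (singleton x)
  then show ?case by (auto intro!: continuous_intros)
next
  case (insert x F)
  have "(\<lambda>y. Min ((\<lambda>b. (y - b)\<^sup>2) ` insert x F)) = (\<lambda>y. min ((y - x)\<^sup>2) (Min ((\<lambda>b. (y - b)\<^sup>2) ` F)))"
    using insert by (auto simp: Min_insert)
  then show ?case using insert by (auto intro!: continuous_intros)
qed

lemma Min_nonneg:
  assumes "finite \<beta>" "\<beta> \<noteq> {}"
  shows "0 \<le> Min ((\<lambda>b. ((x::real) - b)\<^sup>2) ` \<beta>)"
  using assms by (subst Min_ge_iff) (auto simp del: power2_diff)

lemma key_ineq: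
  fixes p u v :: real
  assumes "p > 0" "u \<ge> 0" "v \<ge> 0"
  shows "(p+1)^2 * (u^3/p^2 + v^3) - (u+v)^3 = (u - p * v)^2 * ((2*p+1)*u + p*(p+2) * v) / p^2"
  using assms by (simp add: power2_eq_square power3_eq_cube field_simps)
lemma key2:
  fixes p u v :: real
  assumes "p > 0" "u \<ge> 0" "v \<ge> 0"
  shows "u^3/(12*p^2) + v^3/12 - (u+v)^3/(12*(p+1)^2) = (u - p * v)^2 * ((2*p+1)*u + p*(p+2) * v) / (12*p^2*(p+1)^2)"
proof -
  have q: "(p+1)^2 \<noteq> 0" using assms by auto
  have g: "w/12 + y/12 - z/(12*q) = (q*(w+y) - z)/(12*q)" if "q \<noteq> 0" for w y z q :: real
    using that by (simp add: field_simps)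
  have "u^3/(12*p^2) + v^3/12 - (u+v)^3/(12*(p+1)^2) = (u^3/p^2)/12 + v^3/12 - (u+v)^3/(12*(p+1)^2)" by simp
  also have "\<dots> = ((p+1)^2 * (u^3/p^2 + v^3) - (u+v)^3) / (12*(p+1)^2)" by (rule g[OF q])
  also have "\<dots> = (u - p * v)^2 * ((2*p+1)*u + p*(p+2) * v) / p^2 / (12*(p+1)^2)" by (simp only: key_ineq[OF assms])
  also have "\<dots> = (u - p * v)^2 * ((2*p+1)*u + p*(p+2) * v) / (12*p^2*(p+1)^2)" by (simp add: field_simps)
  finally show ?thesis .
qed
lemma geom:
  fixes M a c s :: real
  assumes "M > 0" "s = a + M*(c-a)/(M+1)"
  shows "s = ((a + (2*M-1)/(2*M)*(s-a)) + (s+c)/2)/2"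
proof -
  have "M \<noteq> 0" "M + 1 \<noteq> 0" using assms by auto
  then have gen: "x / (2 * M) * (M * L / (M + 1)) = x / (2 * (M + 1)) * L" for x L by (simp add: field_simps)
  have sa: "s - a = M*(c-a)/(M+1)" using assms(2) by simp
  have e: "(2*M-1)/(2*M)*(s-a) = (2*M-1)/(2*(M+1))*(c-a)" by (simp only: sa gen)
  have "((a + (2*M-1)/(2*M)*(s-a)) + (s+c)/2)/2 = (4*a + (2*M-1)/(2*(M+1))*(c-a)*2 + (s - a) + (c-a))/4"
    unfolding e by (simp add: field_simps)
  also have "\<dots> = s" using assms(2) \<open>M+1 \<noteq> 0\<close> by (simp add: field_simps)
  finally show ?thesis by simp
qed
lemma tgt:
  fixes M L :: real
  assumes "M > 0"
  shows "(M*L/(M+1))^3/(12*M^2) + (L/(M+1))^3/12 = L^3/(12*(M+1)^2)"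
proof -
  have "M \<noteq> 0" "M + 1 \<noteq> 0" using assms by auto
  then show ?thesis by (simp add: field_simps) (simp add: power2_eq_square power3_eq_cube algebra_simps)
qed

lemma Min_left:
  fixes x t b0 :: real
  assumes "finite B" "b0 \<in> B" "\<forall>b\<in>B. b \<le> b0" "b0 < t" "x \<le> (b0 + t) / 2"
  shows "Min ((\<lambda>b. (x - b)\<^sup>2) ` insert t B) = Min ((\<lambda>b. (x - b)\<^sup>2) ` B)"
proof -
  have "Min ((\<lambda>b. (x - b)\<^sup>2) ` B) \<le> (x - b0)\<^sup>2" using assms by (intro Min_le) auto
  also have "(x - b0)\<^sup>2 \<le> (x - t)\<^sup>2"
  proof -
    have "(x - t)\<^sup>2 - (x - b0)\<^sup>2 = (b0 - t) * (2 * x - t - b0)" by (simp add: power2_eq_square algebra_simps)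
    also have "\<dots> \<ge> 0" using assms by (intro mult_nonpos_nonpos) auto
    finally show ?thesis by simp
  qed
  finally have le: "Min ((\<lambda>b. (x - b)\<^sup>2) ` B) \<le> (x - t)\<^sup>2" .
  have ne: "(\<lambda>b. (x - b)\<^sup>2) ` B \<noteq> {}" "finite ((\<lambda>b. (x - b)\<^sup>2) ` B)" using assms by auto
  show ?thesis using le by (simp add: Min_insert[OF ne(2,1)] min_def)
qed

lemma Min_right:
  fixes x t b0 :: real
  assumes "finite B" "B \<noteq> {}" "\<forall>b\<in>B. b \<le> b0" "b0 < t" "x \<ge> (b0 + t) / 2"
  shows "Min ((\<lambda>b. (x - b)\<^sup>2) ` insert t B) = (x - t)\<^sup>2"
proof -
  have "\<forall>b\<in>B. (x - t)\<^sup>2 \<le> (x - b)\<^sup>2"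
  proof
    fix b assume "b \<in> B"
    have "(x - b)\<^sup>2 - (x - t)\<^sup>2 = (t - b) * (2 * x - b - t)" by (simp add: power2_eq_square algebra_simps)
    also have "\<dots> \<ge> 0" using assms \<open>b \<in> B\<close> by (intro mult_nonneg_nonneg) auto
    finally show "(x - t)\<^sup>2 \<le> (x - b)\<^sup>2" by simp
  qed
  then have le: "(x - t)\<^sup>2 \<le> Min ((\<lambda>b. (x - b)\<^sup>2) ` B)" using assms by (subst Min_ge_iff) auto
  have ne: "(\<lambda>b. (x - b)\<^sup>2) ` B \<noteq> {}" "finite ((\<lambda>b. (x - b)\<^sup>2) ` B)" using assms by auto
  show ?thesis using le by (simp add: Min_insert[OF ne(2,1)] min_def)
qed

lemma integrable_Min:
  assumes "finite \<beta>" "\<beta> \<noteq> {}"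
  shows "(\<lambda>x::real. Min ((\<lambda>b. (x - b)\<^sup>2) ` \<beta>)) integrable_on {a..c}"
  by (intro integrable_continuous_interval cont_Min assms)

lemma Fq_split:
  fixes t b0 a c s :: real
  assumes "finite B" "b0 \<in> B" "\<forall>b\<in>B. b \<le> b0" "b0 < t" "s = (b0 + t) / 2" "a \<le> s" "s \<le> c"
  shows "Fq (insert t B) a c = Fq B a s + ((c - t)^3 - (s - t)^3) / 3"
proof -
  have ne: "B \<noteq> {}" using assms by auto
  have "Fq (insert t B) a c = integral {a..s} (\<lambda>x. Min ((\<lambda>b. (x - b)\<^sup>2) ` insert t B))
      + integral {s..c} (\<lambda>x. Min ((\<lambda>b. (x - b)\<^sup>2) ` insert t B))"
    unfolding Fq_def by (rule Henstock_Kurzweil_Integration.integral_combine[OF assms(6,7) integrable_Min[OF finite_insert[THEN iffD2, OF assms(1)] insert_not_empty], symmetric])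
  also have "integral {a..s} (\<lambda>x. Min ((\<lambda>b. (x - b)\<^sup>2) ` insert t B)) = Fq B a s"
    unfolding Fq_def by (intro integral_cong Min_left[OF assms(1-4)]) (use assms in auto)
  also have "integral {s..c} (\<lambda>x. Min ((\<lambda>b. (x - b)\<^sup>2) ` insert t B)) = integral {s..c} (\<lambda>x. (x - t)\<^sup>2)"
    by (intro integral_cong Min_right[OF assms(1) ne assms(3,4)]) (use assms in auto)
  also have "\<dots> = ((c - t)^3 - (s - t)^3) / 3" using assms by (intro sq_int) auto
  finally show ?thesis .
qed

lemma Fq_left:
  fixes t b0 a c s :: real
  assumes "finite B" "b0 \<in> B" "\<forall>b\<in>B. b \<le> b0" "b0 < t" "s = (b0 + t) / 2" "c \<le> s"
  shows "Fq (insert t B) a c = Fq B a c"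
  unfolding Fq_def by (intro integral_cong Min_left[OF assms(1-4)]) (use assms in auto)

lemma Fq_right:
  fixes t b0 a c s :: real
  assumes "finite B" "B \<noteq> {}" "\<forall>b\<in>B. b \<le> b0" "b0 < t" "s = (b0 + t) / 2" "s \<le> a" "a \<le> c"
  shows "Fq (insert t B) a c = ((c - t)^3 - (a - t)^3) / 3"
proof -
  have "Fq (insert t B) a c = integral {a..c} (\<lambda>x. (x - t)\<^sup>2)"
    unfolding Fq_def by (intro integral_cong Min_right[OF assms(1-4)]) (use assms in auto)
  also have "\<dots> = ((c - t)^3 - (a - t)^3) / 3" using assms by (intro sq_int) auto
  finally show ?thesis .
qed

lemma Fq_single:
  fixes a c b :: real
  assumes "a \<le> c"
  shows "Fq {b} a c = (c - a)^3 / 12 + (c - a) * (b - (a + c) / 2)\<^sup>2"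
  using sq_int[OF assms, of b] sq_int_eq[of c b a] by (simp add: Fq_def)

lemma mids_1: "mids 1 a c = {(a + c) / 2}"
  unfolding mids_def by (auto simp: field_simps intro!: exI[of _ "1::nat"])

lemma aux_frac:
  fixes M I L :: real
  assumes "M > 0"
  shows "(2 * I - 1) / (2 * M) * (M * L / (M + 1)) = (2 * I - 1) / (2 * (M + 1)) * L"
proof -
  have "M \<noteq> 0" "M + 1 \<noteq> 0" using assms by auto
  then have "x / (2 * M) * (M * L / (M + 1)) = x / (2 * (M + 1)) * L" for x by (simp add: field_simps)
  then show ?thesis by blast
qed

lemma mids_Suc:
  fixes a c s :: real
  assumes "m \<ge> 1" "s = a + real m * (c - a) / (real m + 1)"
  shows "mids (Suc m) a c = insert ((s + c) / 2) (mids m a s)"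
proof -
  have m: "real m > 0" using assms by auto
  have e1: "a + (2 * real i - 1) / (2 * real m) * (s - a) = a + (2 * real i - 1) / (2 * real (Suc m)) * (c - a)" for i
  proof -
    have "s - a = real m * (c - a) / (real m + 1)" using assms(2) by simp
    then have "a + (2 * real i - 1) / (2 * real m) * (s - a) = a + (2 * real i - 1) / (2 * real m) * (real m * (c - a) / (real m + 1))" by simp
    also have "\<dots> = a + (2 * real i - 1) / (2 * real (Suc m)) * (c - a)" using aux_frac[OF m, of "real i" "c - a"] by simp
    finally show ?thesis .
  qed
  have e2: "(s + c) / 2 = a + (2 * real (Suc m) - 1) / (2 * real (Suc m)) * (c - a)"
    using m assms(2) by (simp add: field_simps)
  show ?thesis
  proof (intro set_eqI iffI)
    fix x assume "x \<in> mids (Suc m) a c"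
    then obtain i where i: "1 \<le> i" "i \<le> Suc m" "x = a + (2 * real i - 1) / (2 * real (Suc m)) * (c - a)"
      unfolding mids_def by auto
    show "x \<in> insert ((s + c) / 2) (mids m a s)"
    proof (cases "i = Suc m")
      case True then show ?thesis using i e2 by simp
    next
      case False
      then have "i \<le> m" using i by auto
      have "x = a + (2 * real i - 1) / (2 * real m) * (s - a)" using i e1[of i] by simp
      then have "x \<in> mids m a s" using \<open>1 \<le> i\<close> \<open>i \<le> m\<close> unfolding mids_def by blast
      then show ?thesis by simp
    qed
  next
    fix x assume "x \<in> insert ((s + c) / 2) (mids m a s)"
    then show "x \<in> mids (Suc m) a c"
    proof
      assume "x = (s + c) / 2"
      then have "x = a + (2 * real (Suc m) - 1) / (2 * real (Suc m)) * (c - a)" using e2 by simp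
      then show ?thesis unfolding mids_def by (intro CollectI exI[of _ "Suc m"]) auto
    next
      assume "x \<in> mids m a s"
      then obtain i where i: "1 \<le> i" "i \<le> m" "x = a + (2 * real i - 1) / (2 * real m) * (s - a)"
        unfolding mids_def by auto
      then show ?thesis using e1[of i] unfolding mids_def by auto
    qed
  qed
qed

lemma mids_finite: "finite (mids m a c)"
proof -
  have "mids m a c = (\<lambda>i. a + (2 * real i - 1) / (2 * real m) * (c - a)) ` {1..m}"
    unfolding mids_def by auto
  then show ?thesis by simp
qed

lemma mids_max:
  fixes a c :: real
  assumes "m \<ge> 1" "a \<le> c"
  shows "a + (2 * real m - 1) / (2 * real m) * (c - a) \<in> mids m a c"
    "\<forall>b\<in>mids m a c. b \<le> a + (2 * real m - 1) / (2 * real m) * (c - a)"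
proof -
  show "a + (2 * real m - 1) / (2 * real m) * (c - a) \<in> mids m a c"
    using assms unfolding mids_def by auto
  show "\<forall>b\<in>mids m a c. b \<le> a + (2 * real m - 1) / (2 * real m) * (c - a)"
  proof
    fix b assume "b \<in> mids m a c"
    then obtain i where i: "1 \<le> i" "i \<le> m" "b = a + (2 * real i - 1) / (2 * real m) * (c - a)"
      unfolding mids_def by auto
    have "(2 * real i - 1) / (2 * real m) \<le> (2 * real m - 1) / (2 * real m)"
      using i assms by (intro divide_right_mono) auto
    then show "b \<le> a + (2 * real m - 1) / (2 * real m) * (c - a)"
      using i assms by (auto intro!: divide_right_mono mult_right_mono)
  qed
qed

lemma mids_opt:
  fixes a c :: real
  assumes "m \<ge> 1" "a < c"
  shows "card (mids m a c) = m \<and> Fq (mids m a c) a c = (c - a)^3 / (12 * (real m)^2)"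
  using assms
proof (induction m arbitrary: a c rule: nat_induct_at_least)
  case base
  then show ?case using Fq_single[of a c "(a + c) / 2"] mids_1[of a c] by simp
next
  case (Suc m)
  define s where "s = a + real m * (c - a) / (real m + 1)"
  define t where "t = (s + c) / 2"
  define b0 where "b0 = a + (2 * real m - 1) / (2 * real m) * (s - a)"
  have m: "real m > 0" using Suc by auto
  have as: "a < s" unfolding s_def using m Suc by (simp add: field_simps)
  have sc: "s < c" unfolding s_def using m Suc by (simp add: field_simps)
  have eq: "mids (Suc m) a c = insert t (mids m a s)" unfolding t_def by (rule mids_Suc[OF Suc(1) s_def])
  have b0in: "b0 \<in> mids m a s" "\<forall>b\<in>mids m a s. b \<le> b0"
    unfolding b0_def using mids_max[OF Suc(1), of a s] as by auto
  have sgeom: "s = (b0 + t) / 2" unfolding b0_def t_def by (rule geom[OF m s_def])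
  have b0t: "b0 < t" using sgeom sc t_def by argo
  have tn: "t \<notin> mids m a s" using b0in b0t by auto
  have IH: "card (mids m a s) = m" "Fq (mids m a s) a s = (s - a)^3 / (12 * (real m)^2)"
    using Suc.IH[OF as] by auto
  have "Fq (mids (Suc m) a c) a c = Fq (mids m a s) a s + ((c - t)^3 - (s - t)^3) / 3"
    unfolding eq by (rule Fq_split[OF mids_finite b0in b0t sgeom]) (use as sc in auto)
  also have "((c - t)^3 - (s - t)^3) / 3 = (c - s)^3 / 12"
    using sq_int_eq[of c t s] unfolding t_def by simp
  finally have F1: "Fq (mids (Suc m) a c) a c = Fq (mids m a s) a s + (c - s)^3 / 12" .
  have sa: "s - a = real m * (c - a) / (real m + 1)" unfolding s_def by simp
  have cs: "c - s = (c - a) / (real m + 1)" unfolding s_def using m by (simp add: field_simps)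
  have "Fq (mids (Suc m) a c) a c = (c - a)^3 / (12 * (real m + 1)^2)"
    unfolding F1 IH(2) sa cs by (rule tgt[OF m])
  then show ?case using eq tn IH(1) mids_finite by (simp add: add.commute)
qed

lemma sq_int_ge:
  fixes a c t :: real
  assumes "a \<le> c"
  shows "(c - a)^3 / 12 \<le> ((c - t)^3 - (a - t)^3) / 3"
  using sq_int_eq[of c t a] assms by simp

lemma lower:
  fixes a c :: real
  assumes "m \<ge> 1" "finite \<beta>" "card \<beta> = m" "a < c"
  shows "(c - a)^3 / (12 * (real m)^2) \<le> Fq \<beta> a c \<and>
         (Fq \<beta> a c = (c - a)^3 / (12 * (real m)^2) \<longrightarrow> \<beta> = mids m a c)"
  using assms
proof (induction m arbitrary: \<beta> a c rule: nat_induct_at_least)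
  case base
  then obtain b where b: "\<beta> = {b}" by (auto simp: card_Suc_eq)
  have F: "Fq \<beta> a c = (c - a)^3 / 12 + (c - a) * (b - (a + c) / 2)\<^sup>2"
    unfolding b using base by (intro Fq_single) auto
  have E0: "(c - a) * (b - (a + c) / 2)\<^sup>2 \<ge> 0" using base by auto
  have E1: "(c - a) * (b - (a + c) / 2)\<^sup>2 = 0 \<Longrightarrow> b = (a + c) / 2" using base by auto
  have "(c - a)^3 / (12 * (real 1)^2) \<le> Fq \<beta> a c" using F E0 by simp
  moreover have "\<beta> = mids 1 a c" if "Fq \<beta> a c = (c - a)^3 / (12 * (real 1)^2)"
  proof -
    have "(c - a) * (b - (a + c) / 2)\<^sup>2 = 0" using that F by simp
    then show ?thesis using E1 b mids_1[of a c] by simp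
  qed
  ultimately show ?case by blast
next
  case (Suc m)
  define t where "t = Max \<beta>"
  define B where "B = \<beta> - {t}"
  have ne\<beta>: "\<beta> \<noteq> {}" using Suc by auto
  have tin: "t \<in> \<beta>" unfolding t_def using Suc ne\<beta> by auto
  have finB: "finite B" and cardB: "card B = m" unfolding B_def using Suc tin by auto
  have neB: "B \<noteq> {}" using cardB Suc(1) by auto
  define b0 where "b0 = Max B"
  have b0in: "b0 \<in> B" and b0max: "\<forall>b\<in>B. b \<le> b0" unfolding b0_def using finB neB by auto
  have b0t: "b0 < t"
  proof -
    have "b0 \<in> \<beta>" "b0 \<noteq> t" using b0in unfolding B_def by auto
    moreover have "b0 \<le> t" using \<open>b0 \<in> \<beta>\<close> Suc(3) unfolding t_def by auto
    ultimately show ?thesis by auto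
  qed
  have \<beta>eq: "\<beta> = insert t B" unfolding B_def using tin by auto
  define s where "s = (b0 + t) / 2"
  have m: "real m > 0" using Suc by auto
  have lt: "(c - a)^3 / (12 * (real (Suc m))^2) < (c - a)^3 / (12 * (real m)^2)"
  proof -
    have "(real m)^2 < (real (Suc m))^2" by (intro power_strict_mono) auto
    then show ?thesis using Suc m by (intro divide_strict_left_mono) (auto intro!: mult_pos_pos)
  qed
  have lt1: "(c - a)^3 / (12 * (real (Suc m))^2) < (c - a)^3 / 12"
  proof -
    have "1 < (real (Suc m))^2" using m by (intro one_less_power) auto
    then show ?thesis using Suc by (intro divide_strict_left_mono) auto
  qed
  consider "c \<le> s" | "s \<le> a" | "a < s" "s < c" by argo
  then show ?case
  proof cases
    case 1
    have "Fq \<beta> a c = Fq B a c" unfolding \<beta>eq by (rule Fq_left[OF finB b0in b0max b0t s_def 1])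
    moreover have "(c - a)^3 / (12 * (real m)^2) \<le> Fq B a c" using Suc.IH[OF finB cardB Suc(5)] by simp
    ultimately show ?thesis using lt by auto
  next
    case 2
    have "Fq \<beta> a c = ((c - t)^3 - (a - t)^3) / 3" unfolding \<beta>eq
      by (rule Fq_right[OF finB neB b0max b0t s_def 2]) (use Suc in auto)
    moreover have "(c - a)^3 / 12 \<le> ((c - t)^3 - (a - t)^3) / 3" using Suc by (intro sq_int_ge) auto
    ultimately show ?thesis using lt1 by auto
  next
    case 3
    define u where "u = s - a"
    define v where "v = c - s"
    have u: "u > 0" and v: "v > 0" unfolding u_def v_def using 3 by auto
    have uv: "u + v = c - a" unfolding u_def v_def by simp
    have F: "Fq \<beta> a c = Fq B a s + ((c - t)^3 - (s - t)^3) / 3" unfolding \<beta>eq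
      by (rule Fq_split[OF finB b0in b0max b0t s_def]) (use 3 in auto)
    have H: "((c - t)^3 - (s - t)^3) / 3 = v^3 / 12 + (c - s) * (t - (s + c) / 2)\<^sup>2"
      unfolding v_def by (rule sq_int_eq)
    have IH: "u^3 / (12 * (real m)^2) \<le> Fq B a s"
      "Fq B a s = u^3 / (12 * (real m)^2) \<longrightarrow> B = mids m a s"
      using Suc.IH[OF finB cardB 3(1)] unfolding u_def by auto
    define R where "R = (u - real m * v)^2 * ((2*real m+1)*u + real m*(real m+2) * v) / (12*(real m)^2*(real m+1)^2)"
    have K: "u^3/(12*(real m)^2) + v^3/12 - (c - a)^3/(12*(real (Suc m))^2) = R"
      unfolding R_def uv[symmetric] using key2[OF m, of u v] u v by (simp add: add.commute)
    have R0: "R \<ge> 0" unfolding R_def using u v m by (intro divide_nonneg_nonneg mult_nonneg_nonneg) auto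
    have E0: "(c - s) * (t - (s + c) / 2)\<^sup>2 \<ge> 0" using 3 by auto
    have gen: "\<And>F X W E Y T K :: real. F = X + (W + E) \<Longrightarrow> Y \<le> X \<Longrightarrow> Y + W - T = K \<Longrightarrow> K \<ge> 0 \<Longrightarrow> E \<ge> 0
        \<Longrightarrow> T \<le> F \<and> (F = T \<longrightarrow> X = Y \<and> E = 0 \<and> K = 0)" by linarith
    have main: "(c - a)^3/(12*(real (Suc m))^2) \<le> Fq \<beta> a c \<and> (Fq \<beta> a c = (c - a)^3/(12*(real (Suc m))^2)
        \<longrightarrow> Fq B a s = u^3/(12*(real m)^2) \<and> (c - s) * (t - (s + c) / 2)\<^sup>2 = 0 \<and> R = 0)"
      by (rule gen[OF _ IH(1) K R0 E0]) (simp only: F H)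
    have "\<beta> = mids (Suc m) a c" if eq: "Fq \<beta> a c = (c - a)^3/(12*(real (Suc m))^2)"
    proof -
      have B: "B = mids m a s" using main eq IH(2) by auto
      have "(c - s) * (t - (s + c) / 2)\<^sup>2 = 0" using main eq by auto
      then have tmid: "t = (s + c) / 2" using 3 by auto
      have "R = 0" using main eq by auto
      moreover have "(2*real m+1)*u + real m*(real m+2) * v > 0" using u v m by (intro add_pos_pos mult_pos_pos) auto
      ultimately have "(u - real m * v)^2 = 0" unfolding R_def using m by auto
      then have "u = real m * v" by simp
      then have "s = a + real m * (c - a) / (real m + 1)" unfolding u_def v_def using m by (simp add: field_simps)
      from mids_Suc[OF Suc(1) this] show ?thesis unfolding \<beta>eq B tmid by simp
    qed
    then show ?thesis using main by blast
  qed
qed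




lemma Jset_eq: "Jset j = {1 - 1 / 3 ^ (j - 1) .. 1 - 2 / 3 ^ j}" by (simp add: Jset_def)

lemma Jset_bounds:
  assumes "j \<ge> 1" "x \<in> Jset j"
  shows "1 - 3 / 3 ^ j \<le> x" "x \<le> 1 - 2 / 3 ^ j"
proof -
  have "(3::real) ^ j = 3 * 3 ^ (j - 1)" using assms by (cases j) auto
  then have "1 / (3::real) ^ (j - 1) = 3 / 3 ^ j" by (simp add: field_simps)
  then show "1 - 3 / 3 ^ j \<le> x" "x \<le> 1 - 2 / 3 ^ j" using assms by (auto simp: Jset_def)
qed

lemma Jset_disj:
  assumes "i \<ge> 1" "j \<ge> 1" "x \<in> Jset i" "x \<in> Jset j"
  shows "i = j"
proof (rule ccontr)
  assume "i \<noteq> j"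
  then consider "i < j" | "j < i" by arith
  then show False
  proof cases
    case 1
    have "(3::real) ^ i \<le> 3 ^ (j - 1)" using 1 by (intro power_increasing) auto
    then have "3 / (3::real) ^ j \<le> 1 / 3 ^ i"
    proof -
      have "(3::real) ^ j = 3 * 3 ^ (j - 1)" using 1 by (cases j) auto
      then show ?thesis using \<open>(3::real) ^ i \<le> 3 ^ (j - 1)\<close> by (simp add: field_simps)
    qed
    moreover have "2 / (3::real) ^ i = 2 * (1 / 3 ^ i)" "1 / (3::real) ^ i > 0" by auto
    ultimately show False using Jset_bounds[OF assms(1,3)] Jset_bounds[OF assms(2,4)]
      by argo
  next
    case 2
    have "(3::real) ^ j \<le> 3 ^ (i - 1)" using 2 by (intro power_increasing) auto
    then have "3 / (3::real) ^ i \<le> 1 / 3 ^ j"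
    proof -
      have "(3::real) ^ i = 3 * 3 ^ (i - 1)" using 2 by (cases i) auto
      then show ?thesis using \<open>(3::real) ^ j \<le> 3 ^ (i - 1)\<close> by (simp add: field_simps)
    qed
    moreover have "2 / (3::real) ^ j = 2 * (1 / 3 ^ j)" "1 / (3::real) ^ j > 0" by auto
    ultimately show False using Jset_bounds[OF assms(1,3)] Jset_bounds[OF assms(2,4)]
      by argo
  qed
qed

lemma dens_J:
  assumes "j \<ge> 1" "x \<in> Jset j"
  shows "dens x = (3/2) ^ j"
proof -
  have "(LEAST n. n \<ge> 1 \<and> x \<in> Jset n) = j"
    by (rule Least_equality) (use assms Jset_disj in auto)
  then show ?thesis using assms unfolding dens_def by auto
qed

lemma dens_out:
  assumes "\<forall>j\<ge>1. x \<notin> Jset j"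
  shows "dens x = 0"
  using assms unfolding dens_def by auto

lemma disj_J: "disjoint_family (\<lambda>i. Jset (Suc i))"
  unfolding disjoint_family_on_def using Jset_disj by fastforce

lemma dens_sum: "ennreal (dens x) = (\<Sum>i. ennreal ((3/2) ^ Suc i) * indicator (Jset (Suc i)) x)"
proof (cases "\<exists>j\<ge>1. x \<in> Jset j")
  case True
  then obtain j where j: "j \<ge> 1" "x \<in> Jset j" by auto
  then obtain i where i: "j = Suc i" by (cases j) auto
  show ?thesis unfolding dens_J[OF j] i using suminf_cmult_indicator[OF disj_J, of x i "\<lambda>i. ennreal ((3/2) ^ Suc i)"] j i
    by simp
next
  case False
  then have "\<And>i. x \<notin> Jset (Suc i)" by auto
  then show ?thesis using dens_out False by simp
qed

lemma dens_meas: "(\<lambda>x. ennreal (dens x)) \<in> borel_measurable lborel"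
  unfolding dens_sum by (auto simp: Jset_def)

lemma int_J:
  assumes "j \<ge> 1" "continuous_on UNIV g" "\<And>x. 0 \<le> g x"
  shows "(\<integral>\<^sup>+ x. ennreal (g x) * indicator (Jset j) x \<partial>Pm) = ennreal ((3/2)^j * integral (Jset j) g)"
proof -
  have gb: "g \<in> borel_measurable borel" by (rule borel_measurable_continuous_onI[OF assms(2)])
  have gm: "(\<lambda>x. ennreal (g x) * indicator (Jset j) x) \<in> borel_measurable lborel"
    using gb by (auto simp: Jset_def)
  have "(\<integral>\<^sup>+ x. ennreal (g x) * indicator (Jset j) x \<partial>Pm) = (\<integral>\<^sup>+ x. ennreal (dens x) * (ennreal (g x) * indicator (Jset j) x) \<partial>lborel)"
    unfolding Pm_def by (rule nn_integral_density[OF dens_meas gm])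
  also have "\<dots> = (\<integral>\<^sup>+ x. ennreal ((3/2)^j * g x) * indicator (Jset j) x \<partial>lborel)"
    by (rule nn_integral_cong) (auto simp: dens_J[OF assms(1)] ennreal_mult assms(3) split: split_indicator)
  also have "\<dots> = ennreal (integral (Jset j) (\<lambda>x. (3/2)^j * g x))"
  proof (rule nn_integral_has_integral_lebesgue')
    show "0 \<le> (3/2)^j * g x" for x using assms(3)[of x] by simp
    have "(\<lambda>x. (3/2)^j * g x) integrable_on Jset j" unfolding Jset_def
      by (intro integrable_continuous_interval continuous_intros continuous_on_subset[OF assms(2)]) auto
    then show "((\<lambda>x. (3/2)^j * g x) has_integral integral (Jset j) (\<lambda>x. (3/2)^j * g x)) (Jset j)"
      by (rule integrable_integral)
  qed
  also have "\<dots> = ennreal ((3/2)^j * integral (Jset j) g)" by simp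
  finally show ?thesis .
qed

lemma p1: "(3/2::real)^j * (1/3^j) = (1/2)^j" by (induction j) (simp_all add: field_simps)
lemma p2: "(3/2::real)^j * (1/3^j)^2 = (1/6)^j" by (induction j) (simp_all add: field_simps)
lemma p3: "(3/2::real)^j * (1/3^j)^3 = (1/18)^j" by (induction j) (simp_all add: field_simps)
lemma p4: "(1/6::real)^j = (1/2)^j * (1/3)^j" by (induction j) (simp_all add: field_simps)
lemma p5: "(1/18::real)^j = (1/2)^j * ((1/3)^j)^2" by (induction j) (simp_all add: field_simps)
lemma cube: "(((y::real) - 2*T)^3 - (y - 3*T)^3)/3 = y^2*T - 5*y*T^2 + 19/3*T^3"
  by (simp add: power2_eq_square power3_eq_cube field_simps)
lemma g: "norm (q::real) < 1 \<Longrightarrow> (\<lambda>i. q^(i+k+1)) sums (q^(k+1) / (1 - q))"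
proof -
  assume "norm q < 1"
  from sums_mult[OF geometric_sums[OF this], of "q^(k+1)"]
  show ?thesis by (simp add: power_add mult_ac)
qed

lemma Jset_eq3:
  assumes "j \<ge> 1"
  shows "Jset j = {1 - 3 / 3 ^ j .. 1 - 2 / 3 ^ j}"
proof -
  have "(3::real) ^ j = 3 * 3 ^ (j - 1)" using assms by (cases j) auto
  then have "1 / (3::real) ^ (j - 1) = 3 / 3 ^ j" by (simp add: field_simps)
  then show ?thesis by (simp add: Jset_def)
qed

lemma sets_Pm[measurable_cong]: "sets Pm = sets borel"
  unfolding Pm_def by simp

lemma int_one_J:
  assumes "j \<ge> 1"
  shows "integral (Jset j) (\<lambda>x. 1::real) = 1 / 3 ^ j"
proof -
  have "1 - 3 / 3 ^ j \<le> 1 - 2 / (3::real) ^ j" by (simp add: divide_right_mono)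
  then show ?thesis unfolding Jset_eq3[OF assms] by (simp add: field_simps)
qed

lemma emeasure_J:
  assumes "j \<ge> 1"
  shows "emeasure Pm (Jset j) = ennreal ((1/2)^j)"
proof -
  have "emeasure Pm (Jset j) = (\<integral>\<^sup>+ x. ennreal 1 * indicator (Jset j) x \<partial>Pm)"
    by (simp add: Jset_def)
  also have "\<dots> = ennreal ((3/2)^j * integral (Jset j) (\<lambda>x. 1))"
    by (rule int_J[OF assms]) auto
  also have "\<dots> = ennreal ((1/2)^j)" unfolding int_one_J[OF assms] p1 ..
  finally show ?thesis .
qed

lemma cond_int:
  assumes B: "B \<in> sets borel" and e: "emeasure Pm B = ennreal e" "e > 0"
    and h: "h \<in> borel_measurable borel" "\<And>x. 0 \<le> h x"
  shows "(\<integral>\<^sup>+ x. ennreal (h x) \<partial>cond_measure Pm B) = ennreal (1/e) * (\<integral>\<^sup>+ x. ennreal (h x) * indicator B x \<partial>Pm)"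
proof -
  have m1: "(\<lambda>x. indicator B x / emeasure Pm B) \<in> borel_measurable Pm" using B by measurable
  have m2: "(\<lambda>x. ennreal (h x)) \<in> borel_measurable Pm" using h by measurable
  have m3: "(\<lambda>x. ennreal (h x) * indicator B x) \<in> borel_measurable Pm" using h B by measurable
  have "(\<integral>\<^sup>+ x. ennreal (h x) \<partial>cond_measure Pm B) = (\<integral>\<^sup>+ x. indicator B x / emeasure Pm B * ennreal (h x) \<partial>Pm)"
    unfolding cond_measure_def by (rule nn_integral_density[OF m1 m2])
  also have "\<dots> = (\<integral>\<^sup>+ x. ennreal (1/e) * (ennreal (h x) * indicator B x) \<partial>Pm)"
    by (rule nn_integral_cong) (auto simp: e divide_ennreal[symmetric] ennreal_times_divide mult.commute split: split_indicator)
  also have "\<dots> = ennreal (1/e) * (\<integral>\<^sup>+ x. ennreal (h x) * indicator B x \<partial>Pm)"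
    by (rule nn_integral_cmult[OF m3])
  finally show ?thesis .
qed

lemma Jtail_eq: "Jtail k = (\<Union>i. Jset (i + k + 1))"
proof (intro set_eqI iffI)
  fix x assume "x \<in> Jtail k"
  then obtain j where j: "j \<ge> k + 1" "x \<in> Jset j" unfolding Jtail_def by auto
  then have "j = (j - k - 1) + k + 1" by auto
  then show "x \<in> (\<Union>i. Jset (i + k + 1))" using j by (metis UN_iff UNIV_I)
next
  fix x assume "x \<in> (\<Union>i. Jset (i + k + 1))"
  then show "x \<in> Jtail k" unfolding Jtail_def by auto
qed

lemma disj_tail: "disjoint_family (\<lambda>i. Jset (i + k + 1))"
  unfolding disjoint_family_on_def using Jset_disj by fastforce

lemma Jtail_sets: "Jtail k \<in> sets borel"
  unfolding Jtail_eq by (auto simp: Jset_def)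

lemma tail_int:
  assumes "continuous_on UNIV g" "\<And>x. 0 \<le> g x"
  shows "(\<integral>\<^sup>+ x. ennreal (g x) * indicator (Jtail k) x \<partial>Pm)
     = (\<Sum>i. ennreal ((3/2)^(i+k+1) * integral (Jset (i+k+1)) g))"
proof -
  have gb: "g \<in> borel_measurable borel" by (rule borel_measurable_continuous_onI[OF assms(1)])
  have "(\<integral>\<^sup>+ x. ennreal (g x) * indicator (Jtail k) x \<partial>Pm)
      = (\<integral>\<^sup>+ x. (\<Sum>i. ennreal (g x) * indicator (Jset (i + k + 1)) x) \<partial>Pm)"
    by (rule nn_integral_cong) (simp only: Jtail_eq ennreal_suminf_cmult suminf_indicator[OF disj_tail])
  also have "\<dots> = (\<Sum>i. \<integral>\<^sup>+ x. ennreal (g x) * indicator (Jset (i + k + 1)) x \<partial>Pm)"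
    by (rule nn_integral_suminf) (use gb in \<open>auto simp: Jset_def\<close>)
  also have "\<dots> = (\<Sum>i. ennreal ((3/2)^(i+k+1) * integral (Jset (i+k+1)) g))"
    by (subst int_J) (use assms in auto)
  finally show ?thesis .
qed

lemma sq_J:
  assumes "j \<ge> 1"
  shows "(3/2)^j * integral (Jset j) (\<lambda>x. (x - c0)\<^sup>2) = (1-c0)^2*(1/2)^j - 5*(1-c0)*(1/6)^j + 19/3*(1/18)^j"
proof -
  define T :: real where "T = 1 / 3 ^ j"
  have le: "1 - 3 / 3 ^ j \<le> 1 - 2 / (3::real) ^ j" by (simp add: divide_right_mono)
  have "integral (Jset j) (\<lambda>x. (x - c0)\<^sup>2) = ((1 - 2 / 3 ^ j - c0)^3 - (1 - 3 / 3 ^ j - c0)^3) / 3"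
    unfolding Jset_eq3[OF assms] by (rule sq_int[OF le])
  also have "\<dots> = (((1 - c0) - 2 * T)^3 - ((1 - c0) - 3 * T)^3) / 3" unfolding T_def by (simp add: algebra_simps)
  also have "\<dots> = (1-c0)^2 * T - 5 * (1-c0) * T^2 + 19/3 * T^3" by (rule cube)
  finally have I: "integral (Jset j) (\<lambda>x. (x - c0)\<^sup>2) = (1-c0)^2 * T - 5 * (1-c0) * T^2 + 19/3 * T^3" .
  have "(3/2)^j * integral (Jset j) (\<lambda>x. (x - c0)\<^sup>2) = (1-c0)^2 * ((3/2)^j * T) - 5 * (1-c0) * ((3/2)^j * T^2) + 19/3 * ((3/2)^j * T^3)"
    unfolding I by (simp add: algebra_simps)
  then show ?thesis unfolding T_def p1 p2 p3 .
qed

lemma tail_sums: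
  "(\<lambda>i. (3/2)^(i+k+1) * integral (Jset (i+k+1)) (\<lambda>x. (x - c0)\<^sup>2)) sums
     ((1-c0)^2*(1/2)^k - (1-c0)*(1/6)^k + 19/51*(1/18)^k)"
proof -
  have s2: "(\<lambda>i. (1/2::real)^(i+k+1)) sums ((1/2)^k)" using g[of "1/2::real" k] by simp
  have s6: "(\<lambda>i. (1/6::real)^(i+k+1)) sums ((1/6)^k / 5)" using g[of "1/6::real" k] by simp
  have s18: "(\<lambda>i. (1/18::real)^(i+k+1)) sums ((1/18)^k / 17)" using g[of "1/18::real" k] by simp
  have A: "(\<lambda>i. (1-c0)^2*(1/2)^(i+k+1) - 5*(1-c0)*(1/6)^(i+k+1) + 19/3*(1/18)^(i+k+1)) sums
        ((1-c0)^2*(1/2)^k - 5*(1-c0)*((1/6)^k / 5) + 19/3*((1/18)^k / 17))"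
    by (intro sums_add sums_diff sums_mult s2 s6 s18)
  have B: "(1-c0)^2*(1/2)^k - 5*(1-c0)*((1/6)^k / 5) + 19/3*((1/18)^k / 17) = (1-c0)^2*(1/2)^k - (1-c0)*(1/6)^k + 19/51*(1/18::real)^k"
    by simp
  have C: "(\<lambda>i. (3/2)^(i+k+1) * integral (Jset (i+k+1)) (\<lambda>x. (x - c0)\<^sup>2)) =
      (\<lambda>i. (1-c0)^2*(1/2)^(i+k+1) - 5*(1-c0)*(1/6)^(i+k+1) + 19/3*(1/18)^(i+k+1))"
    by (rule ext, rule sq_J) simp
  show ?thesis unfolding C B[symmetric] by (rule A)
qed

lemma tail_one_sums:
  "(\<lambda>i. (3/2)^(i+k+1) * integral (Jset (i+k+1)) (\<lambda>x. 1::real)) sums ((1/2)^k)"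
proof -
  have "(\<lambda>i. (3/2::real)^(i+k+1) * integral (Jset (i+k+1)) (\<lambda>x. 1::real)) = (\<lambda>i. (1/2::real)^(i+k+1))"
  proof (rule ext)
    fix i
    have "integral (Jset (i+k+1)) (\<lambda>x. 1::real) = 1/3^(i+k+1)" by (rule int_one_J) simp
    then show "(3/2::real)^(i+k+1) * integral (Jset (i+k+1)) (\<lambda>x. 1::real) = (1/2::real)^(i+k+1)" by (simp only: p1)
  qed
  then show ?thesis using g[of "1/2::real" k] by simp
qed

lemma emeasure_tail: "emeasure Pm (Jtail k) = ennreal ((1/2)^k)"
proof -
  have "emeasure Pm (Jtail k) = (\<integral>\<^sup>+ x. ennreal 1 * indicator (Jtail k) x \<partial>Pm)"
    using Jtail_sets by (simp add: sets_Pm)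
  also have "\<dots> = (\<Sum>i. ennreal ((3/2)^(i+k+1) * integral (Jset (i+k+1)) (\<lambda>x. 1)))"
    by (rule tail_int) auto
  also have "\<dots> = ennreal ((1/2)^k)"
    by (rule suminf_ennreal_eq[OF _ tail_one_sums]) (simp add: int_one_J[of "_ + k + 1", simplified])
  finally show ?thesis .
qed

lemma Verr_tail:
  "Verr Pm {c0} (Jtail k) = ennreal ((1-c0)^2*(1/2)^k - (1-c0)*(1/6)^k + 19/51*(1/18)^k)"
proof -
  have "Verr Pm {c0} (Jtail k) = (\<integral>\<^sup>+ x. ennreal ((x - c0)\<^sup>2) * indicator (Jtail k) x \<partial>Pm)"
    unfolding Verr_def by simp
  also have "\<dots> = (\<Sum>i. ennreal ((3/2)^(i+k+1) * integral (Jset (i+k+1)) (\<lambda>x. (x - c0)\<^sup>2)))"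
    by (rule tail_int) (auto intro!: continuous_intros)
  also have "\<dots> = ennreal ((1-c0)^2*(1/2)^k - (1-c0)*(1/6)^k + 19/51*(1/18)^k)"
  proof (rule suminf_ennreal_eq[OF _ tail_sums])
    fix i
    have "0 \<le> integral (Jset (i+k+1)) (\<lambda>x. (x - c0)\<^sup>2)"
      unfolding Jset_def by (intro integral_nonneg integrable_continuous_interval continuous_intros) auto
    then show "0 \<le> (3/2)^(i+k+1) * integral (Jset (i+k+1)) (\<lambda>x. (x - c0)\<^sup>2)" by simp
  qed
  finally show ?thesis .
qed

lemma Qf_form: "(1-c0)^2*(1/2)^k - (1-c0)*(1/6)^k + 19/51*(1/18)^k
   = (1/2)^k * ((1-c0) - (1/3)^k/2)^2 + 25/204*(1/18::real)^k"
  unfolding p4 p5 by (simp add: power2_eq_square field_simps)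

lemma Fq_nonneg:
  assumes "finite \<beta>" "\<beta> \<noteq> {}" "a \<le> c"
  shows "0 \<le> Fq \<beta> a c"
  unfolding Fq_def by (intro integral_nonneg integrable_Min assms Min_nonneg)

theorem proposition3p5:
  fixes k n :: nat
  assumes "k \<ge> 1" and "n \<ge> 1"
  defines "A \<equiv> {1 - 1 / 3 ^ (k - 1) + (2 * real i - 1) / (2 * real n) * (1 / 3 ^ k) | i. 1 \<le> i \<and> i \<le> n}"
  shows "optimal_n_means (cond_measure Pm (Jset k)) n A
       \<and> (\<forall>\<beta>. optimal_n_means (cond_measure Pm (Jset k)) n \<beta> \<longrightarrow> \<beta> = A)
       \<and> Verr Pm A (Jset k) = ennreal (1 / real n ^ 2 * (1 / 12) * (1 / 18 ^ k))
       \<and> (\<forall>\<alpha>1. optimal_n_means (cond_measure Pm (Jtail k)) 1 \<alpha>1 \<longrightarrow>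
            Verr Pm \<alpha>1 (Jtail k) = ennreal (25 / 204 * (1 / 18 ^ k)))"
proof -
  define a :: real where "a = 1 - 1 / 3 ^ (k - 1)"
  define c :: real where "c = 1 - 2 / 3 ^ k"
  define l :: real where "l = 1 / 3 ^ k"
  have J: "Jset k = {a..c}" unfolding Jset_def a_def c_def ..
  have a3: "a = 1 - 3 / 3 ^ k"
  proof -
    have "(3::real) ^ k = 3 * 3 ^ (k - 1)" using assms(1) by (cases k) auto
    then have "1 / (3::real) ^ (k - 1) = 3 / 3 ^ k" by (simp add: field_simps)
    then show ?thesis unfolding a_def by simp
  qed
  have ca: "c - a = l" unfolding a3 c_def l_def by (simp add: field_simps)
  have l0: "l > 0" unfolding l_def by simp
  have ac: "a < c" using ca l0 by simp
  have Aeq: "A = mids n a c" unfolding A_def mids_def ca unfolding l_def a_def ..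
  define e :: real where "e = (1/2)^k"
  have e0: "e > 0" unfolding e_def by simp
  have eJ: "emeasure Pm (Jset k) = ennreal e" unfolding e_def by (rule emeasure_J[OF assms(1)])
  have Vq: "Verr Pm \<beta> (Jset k) = ennreal ((3/2)^k * Fq \<beta> a c)" if "finite \<beta>" "\<beta> \<noteq> {}" for \<beta>
    unfolding Verr_def Fq_def J[symmetric]
    by (rule int_J[OF assms(1) cont_Min[OF that] Min_nonneg[OF that]])
  have Qq: "qerr (cond_measure Pm (Jset k)) \<beta> = ennreal ((1/e) * ((3/2)^k * Fq \<beta> a c))" if "finite \<beta>" "\<beta> \<noteq> {}" for \<beta>
  proof -
    have "qerr (cond_measure Pm (Jset k)) \<beta> = ennreal (1/e) * Verr Pm \<beta> (Jset k)"
      unfolding qerr_def Verr_def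
      by (rule cond_int[OF _ eJ e0 borel_measurable_continuous_onI[OF cont_Min[OF that]] Min_nonneg[OF that]])
         (simp add: Jset_def)
    also have "\<dots> = ennreal ((1/e) * ((3/2)^k * Fq \<beta> a c))"
      unfolding Vq[OF that] by (rule ennreal_mult[symmetric]) (use e0 Fq_nonneg[OF that, of a c] ac in auto)
    finally show ?thesis .
  qed
  define tg where "tg m = l^3 / (12 * (real m)^2)" for m :: nat
  have tg_le: "tg n \<le> tg m" if "1 \<le> m" "m \<le> n" for m
    unfolding tg_def using that l0 by (intro divide_left_mono mult_left_mono power_mono) auto
  have tg_lt: "tg n < tg m" if "1 \<le> m" "m < n" for m
    unfolding tg_def using that l0 by (intro divide_strict_left_mono mult_strict_left_mono power_strict_mono mult_pos_pos) auto
  have Aprop: "card A = n" "Fq A a c = tg n" using mids_opt[OF assms(2) ac] unfolding Aeq tg_def ca by auto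
  have Afin: "finite A" "A \<noteq> {}" using Aprop assms(2) by (auto simp: Aeq mids_finite)
  have lowb: "tg n \<le> Fq \<beta> a c \<and> (Fq \<beta> a c = tg n \<longrightarrow> \<beta> = A)" if "admissible n \<beta>" for \<beta>
  proof -
    define m where "m = card \<beta>"
    have fin: "finite \<beta>" "\<beta> \<noteq> {}" "m \<le> n" using that unfolding admissible_def m_def by auto
    then have m1: "m \<ge> 1" unfolding m_def by (simp add: Suc_le_eq card_gt_0_iff)
    have L: "tg m \<le> Fq \<beta> a c" "Fq \<beta> a c = tg m \<longrightarrow> \<beta> = mids m a c"
      using lower[OF m1 fin(1) m_def[symmetric] ac] unfolding tg_def ca by auto
    show ?thesis
    proof (cases "m = n")
      case True then show ?thesis using L unfolding Aeq by auto
    next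
      case False
      then have "tg n < tg m" using fin m1 by (intro tg_lt) auto
      then show ?thesis using L by auto
    qed
  qed
  have c1: "0 < (1/e) * (3/2::real)^k" using e0 by simp
  have P1: "optimal_n_means (cond_measure Pm (Jset k)) n A"
    unfolding optimal_n_means_def
  proof (intro conjI allI impI)
    show "admissible n A" unfolding admissible_def using Afin Aprop by auto
    fix \<beta> assume b: "admissible n \<beta>"
    then have fb: "finite \<beta>" "\<beta> \<noteq> {}" unfolding admissible_def by auto
    have "Fq A a c \<le> Fq \<beta> a c" using lowb[OF b] Aprop by auto
    then have "(1/e) * ((3/2)^k * Fq A a c) \<le> (1/e) * ((3/2)^k * Fq \<beta> a c)"
      by (metis c1 less_imp_le mult.assoc mult_left_mono)
    then show "qerr (cond_measure Pm (Jset k)) A \<le> qerr (cond_measure Pm (Jset k)) \<beta>"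
      unfolding Qq[OF Afin] Qq[OF fb] by (rule ennreal_leI)
  qed
  have P2: "\<beta> = A" if opt: "optimal_n_means (cond_measure Pm (Jset k)) n \<beta>" for \<beta>
  proof -
    have b: "admissible n \<beta>" and le: "qerr (cond_measure Pm (Jset k)) \<beta> \<le> qerr (cond_measure Pm (Jset k)) A"
      using opt P1 unfolding optimal_n_means_def by auto
    then have fb: "finite \<beta>" "\<beta> \<noteq> {}" unfolding admissible_def by auto
    have nn: "0 \<le> (1/e) * ((3/2)^k * Fq A a c)" using e0 Fq_nonneg[OF Afin, of a c] ac by simp
    have "ennreal ((1/e) * ((3/2)^k * Fq \<beta> a c)) \<le> ennreal ((1/e) * ((3/2)^k * Fq A a c))"
      using le unfolding Qq[OF Afin] Qq[OF fb] .
    then have "(1/e) * ((3/2)^k * Fq \<beta> a c) \<le> (1/e) * ((3/2)^k * Fq A a c)"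
      using ennreal_le_iff[OF nn] by blast
    then have "Fq \<beta> a c \<le> Fq A a c" by (metis c1 mult.assoc mult_le_cancel_left_pos)
    then have "Fq \<beta> a c = tg n" using lowb[OF b] Aprop by auto
    then show ?thesis using lowb[OF b] by auto
  qed
  have P3: "Verr Pm A (Jset k) = ennreal (1 / real n ^ 2 * (1 / 12) * (1 / 18 ^ k))"
  proof -
    have "(3/2::real)^k * Fq A a c = ((3/2)^k * (1/3^k)^3) / (12 * (real n)^2)"
      unfolding Aprop tg_def l_def by simp
    also have "\<dots> = 1 / real n ^ 2 * (1 / 12) * (1 / 18 ^ k)" unfolding p3 by (simp add: power_one_over)
    finally show ?thesis unfolding Vq[OF Afin] by simp
  qed
  have P4: "Verr Pm \<alpha>1 (Jtail k) = ennreal (25 / 204 * (1 / 18 ^ k))"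
    if opt: "optimal_n_means (cond_measure Pm (Jtail k)) 1 \<alpha>1" for \<alpha>1
  proof -
    define Qf where "Qf c0 = (1-c0)^2*(1/2)^k - (1-c0)*(1/6)^k + 19/51*(1/18::real)^k" for c0 :: real
    define mu :: real where "mu = 1 - (1/3)^k/2"
    have Qf_ge: "25/204*(1/18::real)^k \<le> Qf c0" for c0 unfolding Qf_def Qf_form by simp
    have Qf_mu: "Qf mu = 25/204*(1/18::real)^k" unfolding Qf_def Qf_form mu_def by simp
    have et0: "(0::real) < (1/2)^k" by simp
    have qt: "qerr (cond_measure Pm (Jtail k)) {c0} = ennreal ((1/(1/2)^k) * Qf c0)" for c0
    proof -
      have "qerr (cond_measure Pm (Jtail k)) {c0} = ennreal (1/(1/2)^k) * Verr Pm {c0} (Jtail k)"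
        unfolding qerr_def Verr_def
        by (rule cond_int[OF Jtail_sets emeasure_tail et0]) (auto intro!: borel_measurable_continuous_onI continuous_intros)
      also have "\<dots> = ennreal ((1/(1/2)^k) * Qf c0)" unfolding Verr_tail Qf_def[symmetric]
        using Qf_ge[of c0] by (subst ennreal_mult) (auto intro: order_trans[OF _ Qf_ge])
      finally show ?thesis .
    qed
    have adm: "admissible 1 \<alpha>1" and le: "\<And>\<beta>. admissible 1 \<beta> \<Longrightarrow> qerr (cond_measure Pm (Jtail k)) \<alpha>1 \<le> qerr (cond_measure Pm (Jtail k)) \<beta>"
      using opt unfolding optimal_n_means_def by auto
    have "card \<alpha>1 = 1" using adm unfolding admissible_def by (auto simp: Suc_le_eq card_gt_0_iff dest: le_antisym)
    then obtain c0 where c0: "\<alpha>1 = {c0}" by (auto simp: card_1_singleton_iff)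
    have "qerr (cond_measure Pm (Jtail k)) {c0} \<le> qerr (cond_measure Pm (Jtail k)) {mu}"
      using le[of "{mu}"] c0 by (auto simp: admissible_def)
    moreover have nn: "0 \<le> (1/(1/2)^k) * Qf mu"
    proof -
      have "0 \<le> 25/204*(1/18::real)^k" by simp
      then have "0 \<le> Qf mu" using Qf_ge[of mu] by linarith
      then show ?thesis by simp
    qed
    ultimately have "(1/(1/2)^k) * Qf c0 \<le> (1/(1/2)^k) * Qf mu"
      unfolding qt using ennreal_le_iff[OF nn] by blast
    then have "Qf c0 \<le> Qf mu" using mult_le_cancel_left_pos[of "1/(1/2::real)^k"] by simp
    then have "Qf c0 = 25/204*(1/18::real)^k" using Qf_ge[of c0] Qf_mu by simp
    then show ?thesis unfolding c0 Verr_tail Qf_def[symmetric] by (simp add: power_one_over)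
  qed
  show ?thesis using P1 P2 P3 P4 by blast
qed


end
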